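(* Let $D$ be a strong nonseparable digraph, let $H$ be a strong nonseparable subdigraph of $D$, and let $P=(x_0,x_1,\ldots,x_{r-1},x_r)$ be an ear of $H$ in $D$ with length $l(P)=r\geq 2$. Suppose $H$ has a kernel $N$ and one of the following holds: (1) $x_0,x_r\in N$ and $l(P)$ is even; (2) $x_0\in N$, $x_r\notin N$ and $l(P)$ is odd; (3) $x_0\notin N$ and $x_r\in N$; (4) $x_0,x_r\notin N$. Then $H'=H\cup P$ has a kernel.
   Context: All digraphs are finite, without loops or multiple arcs. Paths and cycles are directed; the length of a path is its number of arcs. A digraph is strong if for every ordered pair of vertices $x,y$ there is a directed path from $x$ to $y$; it is nonseparable if its underlying undirected graph is nonseparable (has no cut vertex). For a subdigraph $H$ of $D$, an ear of $H$ in $D$ is a directed path $(x_0,\ldots,x_r)$ in $D$ whose end vertices $x_0,x_r$ lie in $H$ and whose internal vertices $x_1,\ldots,x_{r-1}$ do not lie in $H$ (or a directed cycle with exactly one vertex $x_0=x_r$ in $H$). A kernel of a digraph is a set $N$ of vertices that is independent (no arc between two of its vertices) and absorbent (every vertex not in $N$ has an out-neighbour in $N$). *)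

theory Defs
  imports Main
begin

definition digraph :: "'a set \<Rightarrow> ('a \<times> 'a) set \<Rightarrow> bool" where
  "digraph V A \<longleftrightarrow> finite V \<and> A \<subseteq> V \<times> V \<and> (\<forall>x. (x, x) \<notin> A)"

definition subdigraph :: "'a set \<Rightarrow> ('a \<times> 'a) set \<Rightarrow> 'a set \<Rightarrow> ('a \<times> 'a) set \<Rightarrow> bool" where
  "subdigraph VH AH V A \<longleftrightarrow> digraph VH AH \<and> VH \<subseteq> V \<and> AH \<subseteq> A"

definition strong :: "'a set \<Rightarrow> ('a \<times> 'a) set \<Rightarrow> bool" where
  "strong V A \<longleftrightarrow> (\<forall>x\<in>V. \<forall>y\<in>V. (x, y) \<in> A\<^sup>*)"

definition und_connected_on :: "'a set \<Rightarrow> ('a \<times> 'a) set \<Rightarrow> bool" where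
  "und_connected_on W A \<longleftrightarrow>
     (\<forall>x\<in>W. \<forall>y\<in>W. (x, y) \<in> ((A \<union> A\<inverse>) \<inter> (W \<times> W))\<^sup>*)"

definition nonseparable :: "'a set \<Rightarrow> ('a \<times> 'a) set \<Rightarrow> bool" where
  "nonseparable V A \<longleftrightarrow> und_connected_on V A \<and> (\<forall>v\<in>V. und_connected_on (V - {v}) A)"

definition kernel :: "'a set \<Rightarrow> ('a \<times> 'a) set \<Rightarrow> 'a set \<Rightarrow> bool" where
  "kernel V A N \<longleftrightarrow> N \<subseteq> V \<and> (\<forall>x\<in>N. \<forall>y\<in>N. (x, y) \<notin> A)
     \<and> (\<forall>v\<in>V - N. \<exists>u\<in>N. (v, u) \<in> A)"

definition walk_arcs :: "'a list \<Rightarrow> ('a \<times> 'a) set" where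
  "walk_arcs xs = {(xs ! i, xs ! Suc i) | i. Suc i < length xs}"

text \<open>An ear of H = (VH, AH) in D = (V, A), given as the vertex list [x_0, ..., x_r]
  (length r + 1, r \<ge> 1): consecutive vertices are arcs of D, the end vertices lie in H,
  the internal vertices are pairwise distinct and lie outside H. If x_0 \<noteq> x_r this is a
  directed path; if x_0 = x_r it is a directed cycle meeting H in exactly x_0.\<close>
definition ear :: "'a set \<Rightarrow> ('a \<times> 'a) set \<Rightarrow> 'a set \<Rightarrow> ('a \<times> 'a) set \<Rightarrow> 'a list \<Rightarrow> bool" where
  "ear VH AH V A xs \<longleftrightarrow> length xs \<ge> 2 \<and> walk_arcs xs \<subseteq> A
     \<and> hd xs \<in> VH \<and> last xs \<in> VH
     \<and> distinct (butlast (tl xs)) \<and> set (butlast (tl xs)) \<inter> VH = {}"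

end

theory Submission
  imports Defs
begin

theorem mainTheorem9:
  fixes V :: "'a set" and A :: "('a \<times> 'a) set"
    and VH :: "'a set" and AH :: "('a \<times> 'a) set"
    and P :: "'a list" and N :: "'a set"
  assumes "digraph V A" and "strong V A" and "nonseparable V A"
    and "subdigraph VH AH V A" and "strong VH AH" and "nonseparable VH AH"
    and "ear VH AH V A P" and "length P - 1 \<ge> 2"
    and "kernel VH AH N"
    and "(hd P \<in> N \<and> last P \<in> N \<and> even (length P - 1))
       \<or> (hd P \<in> N \<and> last P \<notin> N \<and> odd (length P - 1))
       \<or> (hd P \<notin> N \<and> last P \<in> N)
       \<or> (hd P \<notin> N \<and> last P \<notin> N)"
  shows "\<exists>N'. kernel (VH \<union> set P) (AH \<union> walk_arcs P) N'"
proof -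
  define r where "r = length P - 1"
  have r2: "r \<ge> 2" using assms(8) r_def by simp
  have lenP: "length P = Suc r" using r2 r_def by simp
  have P0: "P ! 0 = hd P" using lenP by (metis hd_conv_nth list.size(3) nat.distinct(1))
  have Pr: "P ! r = last P" using lenP by (metis last_conv_nth list.size(3) nat.distinct(1) diff_Suc_1)
  have ear: "hd P \<in> VH" "last P \<in> VH" "distinct (butlast (tl P))"
      "set (butlast (tl P)) \<inter> VH = {}"
    using assms(7) unfolding ear_def by auto
  have AHsub: "AH \<subseteq> VH \<times> VH" using assms(4) unfolding subdigraph_def digraph_def by auto
  have ker: "N \<subseteq> VH" "\<forall>x\<in>N. \<forall>y\<in>N. (x, y) \<notin> AH" "\<forall>v\<in>VH - N. \<exists>u\<in>N. (v, u) \<in> AH"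
    using assms(9) unfolding kernel_def by auto
  have bt: "butlast (tl P) ! (i - 1) = P ! i" if "0 < i" "i < r" for i
    using that lenP by (simp add: nth_butlast nth_tl)
  have lbt: "length (butlast (tl P)) = r - 1" using lenP by simp
  have int: "P ! i \<notin> VH" if "0 < i" "i < r" for i
  proof -
    have "butlast (tl P) ! (i - 1) \<in> set (butlast (tl P))" using that lbt by simp
    then show ?thesis using bt[OF that] ear(4) by auto
  qed
  have injP: "i = j" if "0 < i" "i < r" "0 < j" "j < r" "P ! i = P ! j" for i j
  proof -
    have "butlast (tl P) ! (i - 1) = butlast (tl P) ! (j - 1)" using bt that by metis
    then have "i - 1 = j - 1" using ear(3) lbt that by (simp add: nth_eq_iff_index_eq)
    then show ?thesis using that by simp
  qed
  define S where "S = (\<lambda>i. P ! i) ` {i. 0 < i \<and> i < r \<and> (last P \<in> N \<longleftrightarrow> even (r - i))}"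
  define m where "m = (\<lambda>i. if i = 0 then hd P \<in> N else (last P \<in> N \<longleftrightarrow> even (r - i)))"
  have SVH: "S \<inter> VH = {}" unfolding S_def using int by auto
  have mem: "P ! i \<in> N \<union> S \<longleftrightarrow> m i" if "i \<le> r" for i
  proof (cases "i = 0")
    case True
    then show ?thesis using SVH P0 ear(1) unfolding m_def by auto
  next
    case False
    show ?thesis
    proof (cases "i = r")
      case True
      then show ?thesis using SVH Pr ear(2) False unfolding m_def by auto
    next
      case False2: False
      have "P ! i \<notin> N" using int[of i] False False2 that ker(1) by auto
      moreover have "P ! i \<in> S \<longleftrightarrow> (last P \<in> N \<longleftrightarrow> even (r - i))"
      proof
        assume "P ! i \<in> S"
        then obtain j where j: "0 < j" "j < r" "(last P \<in> N \<longleftrightarrow> even (r - j))" "P ! i = P ! j"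
          unfolding S_def by auto
        then have "i = j" using injP[of i j] False False2 that by auto
        then show "(last P \<in> N \<longleftrightarrow> even (r - i))" using j by simp
      next
        assume "(last P \<in> N \<longleftrightarrow> even (r - i))"
        then show "P ! i \<in> S" unfolding S_def using False False2 that by auto
      qed
      ultimately show ?thesis unfolding m_def using False by auto
    qed
  qed
  have wa: "walk_arcs P = {(P ! i, P ! Suc i) | i. i < r}"
    unfolding walk_arcs_def lenP by simp
  have setP: "set P = (\<lambda>i. P ! i) ` {..r}"
    using lenP by (auto simp: set_conv_nth image_def less_Suc_eq_le)
  have "kernel (VH \<union> set P) (AH \<union> walk_arcs P) (N \<union> S)"
    unfolding kernel_def
  proof (intro conjI ballI)
    show "N \<union> S \<subseteq> VH \<union> set P" using ker(1) unfolding S_def setP by auto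
  next
    fix x y assume x: "x \<in> N \<union> S" and y: "y \<in> N \<union> S"
    show "(x, y) \<notin> AH \<union> walk_arcs P"
    proof
      assume "(x, y) \<in> AH \<union> walk_arcs P"
      then show False
      proof
        assume a: "(x, y) \<in> AH"
        then have "x \<in> N" "y \<in> N" using AHsub SVH x y by auto
        then show False using ker(2) a by auto
      next
        assume "(x, y) \<in> walk_arcs P"
        then obtain i where i: "i < r" "x = P ! i" "y = P ! Suc i" unfolding wa by auto
        have "m i" "m (Suc i)" using mem[of i] mem[of "Suc i"] i x y by auto
        then show False using assms(10) r_def i(1) unfolding m_def
          by (cases "i = 0") (auto split: if_splits)
      qed
    qed
  next
    fix v assume v: "v \<in> VH \<union> set P - (N \<union> S)"
    show "\<exists>u\<in>N \<union> S. (v, u) \<in> AH \<union> walk_arcs P"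
    proof (cases "v \<in> VH")
      case True
      then show ?thesis using ker(3) v by blast
    next
      case False
      then obtain i where i: "i \<le> r" "v = P ! i" using v setP by auto
      have "i \<noteq> 0" "i \<noteq> r" using i False P0 Pr ear(1,2) by (metis, metis)
      then have "\<not> m i" "i < r" using mem[of i] i v by auto
      then have "m (Suc i)" unfolding m_def using \<open>i \<noteq> 0\<close>
        by (auto simp: Suc_diff_Suc)
      then have "P ! Suc i \<in> N \<union> S" using mem[of "Suc i"] \<open>i < r\<close> by auto
      moreover have "(v, P ! Suc i) \<in> walk_arcs P" unfolding wa using i \<open>i < r\<close> by auto
      ultimately show ?thesis by blast
    qed
  qed
  then show ?thesis by blast
qed

end
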